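(* Let $K$ be a countably infinite complete multipartite graph. (i) If $K$ has at least two infinite parts, or infinitely many vertices lying in finite parts, then $K$ is not Ramsey-dense: there is a 2-coloring of the edges of $K_\mathbb{N}$ in which every monochromatic copy of $K$ has upper density $0$. (ii) If $K$ has exactly one infinite part and exactly $n\ge1$ vertices lying in finite parts, then $\frac{1}{2^{2n-1}}\le \mathrm{Rd}_2(K)\le\frac{1}{2^n}$.
   Context: $K_{\mathbb{N}}$ is the complete graph on $\mathbb{N}=\{1,2,\dots\}$; a copy of $K$ is a subgraph of $K_\mathbb{N}$ isomorphic to $K$, monochromatic if all its edges have the same color. $\overline{d}(V)=\limsup_{t\to\infty}|V\cap\{1,\dots,t\}|/t$. A graph is Ramsey-dense if in every 2-coloring of the edges of $K_\mathbb{N}$ there is a monochromatic copy of it with positive upper density. For a 2-coloring $\varphi$, $\mathrm{Rd}_\varphi(K)$ is the supremum of the upper densities of monochromatic copies of $K$, and $\mathrm{Rd}_2(K)=\inf_\varphi\mathrm{Rd}_\varphi(K)$. *)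

theory Defs
  imports "HOL-Analysis.Analysis" "HOL-Library.Liminf_Limsup"
begin

text \<open>A complete multipartite graph K is given by a vertex set V and a part-labelling
  p; u,v in V are adjacent iff p u \<noteq> p v. The parts are the nonempty fibres of p on V.\<close>

definition part_of :: "'a set \<Rightarrow> ('a \<Rightarrow> 'b) \<Rightarrow> 'a \<Rightarrow> 'a set" where
  "part_of V p v = {u \<in> V. p u = p v}"

text \<open>A 2-colouring of the edges of K_N: a colour (bool) for every 2-subset of N = {1,2,...}.\<close>
type_synonym coloring = "nat set \<Rightarrow> bool"

definition upper_density :: "nat set \<Rightarrow> ereal" where
  "upper_density W = limsup (\<lambda>t. ereal (real (card (W \<inter> {1..t})) / real t))"

definition mono_copy :: "coloring \<Rightarrow> 'a set \<Rightarrow> ('a \<Rightarrow> 'b) \<Rightarrow> ('a \<Rightarrow> nat) \<Rightarrow> bool" where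
  "mono_copy \<phi> V p f \<longleftrightarrow> inj_on f V \<and> f ` V \<subseteq> {1..} \<and>
     (\<exists>c. \<forall>u\<in>V. \<forall>v\<in>V. p u \<noteq> p v \<longrightarrow> \<phi> {f u, f v} = c)"

definition ramsey_dense :: "'a set \<Rightarrow> ('a \<Rightarrow> 'b) \<Rightarrow> bool" where
  "ramsey_dense V p \<longleftrightarrow> (\<forall>\<phi>::coloring. \<exists>f. mono_copy \<phi> V p f \<and> upper_density (f ` V) > 0)"

definition Rd_col :: "coloring \<Rightarrow> 'a set \<Rightarrow> ('a \<Rightarrow> 'b) \<Rightarrow> ereal" where
  "Rd_col \<phi> V p = Sup {upper_density (f ` V) | f. mono_copy \<phi> V p f}"

definition Rd2 :: "'a set \<Rightarrow> ('a \<Rightarrow> 'b) \<Rightarrow> ereal" where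
  "Rd2 V p = Inf {Rd_col \<phi> V p | \<phi>. True}"

end

theory Submission
  imports Defs
begin

definition bt :: "nat \<Rightarrow> nat \<Rightarrow> bool" where "bt x k = odd (x div 2^k)"

lemma div_shift: "k \<le> M \<Longrightarrow> ((r::nat) + a * 2^M) div 2^k = r div 2^k + a * 2^(M-k)"
proof -
  assume "k \<le> M"
  then have "(2::nat)^M = 2^k * 2^(M-k)" by (simp add: power_add[symmetric])
  then have e: "r + a * 2^M = r + 2^k * (a * 2^(M-k))" by simp
  have d: "(r + 2^k * (a * 2^(M-k))) div 2^k = r div 2^k + a * 2^(M-k)" by simp
  show ?thesis by (subst e, rule d)
qed

lemma bt_hi: "r < 2^M \<Longrightarrow> bt (r + 2^M) k = (bt r k \<or> k = M)"
proof -
  assume r: "r < 2^M"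
  consider "k < M" | "k = M" | "k > M" by linarith
  then show ?thesis
  proof cases
    case 1
    have "(r + 1 * 2^M) div 2^k = r div 2^k + 1 * 2^(M-k)" using 1 div_shift by (meson less_imp_le)
    moreover have "even ((2::nat)^(M-k))" using 1 by simp
    ultimately show ?thesis using 1 by (simp add: bt_def)
  next
    case 2
    have "(r + 1 * 2^M) div 2^k = r div 2^k + 1 * 2^(M-k)" using 2 div_shift by (meson order_refl)
    moreover have "r div 2^M = 0" using r by simp
    ultimately show ?thesis using 2 by (simp add: bt_def)
  next
    case 3
    have "r + 2^M < 2^k"
    proof -
      have "(2::nat)^k = 2^M * 2^(k-M)" using 3 by (simp add: power_add[symmetric])
      moreover have "(2::nat)^(k-M) \<ge> 2^1" using 3 by (intro power_increasing) auto
      ultimately have "(2::nat)^k \<ge> 2^M * 2" by simp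
      then show ?thesis using r by simp
    qed
    moreover have "r < 2^k" using calculation by linarith
    ultimately show ?thesis using 3 by (simp add: bt_def)
  qed
qed

lemma bt_lo: "r < 2^M \<Longrightarrow> \<not> bt r M"
  by (simp add: bt_def)

lemma bt_mod: "k < M \<Longrightarrow> bt (x mod 2^M) k = bt x k"
proof -
  assume k: "k < M"
  have "x = x mod 2^M + (x div 2^M) * 2^M" by (metis mod_div_mult_eq)
  then have "x div 2^k = (x mod 2^M + (x div 2^M) * 2^M) div 2^k" by simp
  also have "\<dots> = x mod 2^M div 2^k + (x div 2^M) * 2^(M-k)" using k div_shift by simp
  finally have "x div 2^k = x mod 2^M div 2^k + (x div 2^M) * 2^(M-k)" .
  moreover have "even ((2::nat)^(M-k))" using k by simp
  ultimately show ?thesis by (simp add: bt_def)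
qed

lemma block_count:
  "J \<subseteq> {..<M} \<Longrightarrow> card {r\<in>{..<(2::nat)^M}. \<forall>k\<in>J. bt r k = c} = 2^(M - card J)"
proof (induction M arbitrary: J)
  case 0
  then show ?case by simp
next
  case (Suc M)
  define J' where "J' = J - {M}"
  have J': "J' \<subseteq> {..<M}" using Suc.prems unfolding J'_def by (force simp: subset_iff less_Suc_eq)
  have fJ: "finite J" using Suc.prems finite_subset by blast
  have cJ': "card J' \<le> M" using J' by (metis card_lessThan card_mono finite_lessThan)
  define B where "B = {r\<in>{..<(2::nat)^M}. \<forall>k\<in>J'. bt r k = c}"
  have cB: "card B = 2^(M - card J')" using Suc.IH[OF J'] B_def by simp
  define Lo where "Lo = {r\<in>{..<(2::nat)^M}. \<forall>k\<in>J. bt r k = c}"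
  define Hi where "Hi = {r\<in>{..<(2::nat)^M}. \<forall>k\<in>J. bt (r + 2^M) k = c}"
  have split: "{r\<in>{..<(2::nat)^Suc M}. \<forall>k\<in>J. bt r k = c} = Lo \<union> (\<lambda>r. r + 2^M) ` Hi"
  proof (rule set_eqI, rule iffI)
    fix x assume x: "x \<in> {r\<in>{..<(2::nat)^Suc M}. \<forall>k\<in>J. bt r k = c}"
    show "x \<in> Lo \<union> (\<lambda>r. r + 2^M) ` Hi"
    proof (cases "x < 2^M")
      case True then show ?thesis using x Lo_def by auto
    next
      case False
      then have e: "x = (x - 2^M) + 2^M" and l: "x - 2^M < 2^M" using x by auto
      have e2: "x - 2^M + 2^M = x" using False by simp
      have "x - 2^M \<in> Hi" unfolding Hi_def using l x e2 by simp
      then have "x \<in> (\<lambda>r. r + 2^M) ` Hi" using e by blast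
      then show ?thesis by blast
    qed
  next
    fix x assume "x \<in> Lo \<union> (\<lambda>r. r + 2^M) ` Hi"
    then show "x \<in> {r\<in>{..<(2::nat)^Suc M}. \<forall>k\<in>J. bt r k = c}" using Lo_def Hi_def by auto
  qed
  have disj: "Lo \<inter> (\<lambda>r. r + 2^M) ` Hi = {}" using Lo_def by auto
  have cHi: "card ((\<lambda>r. r + 2^M) ` Hi) = card Hi" by (simp add: card_image inj_on_def)
  have Lo_eq: "Lo = (if M \<in> J \<and> c then {} else B)"
  proof -
    have "\<And>r. r < 2^M \<Longrightarrow> (\<forall>k\<in>J. bt r k = c) = ((M \<in> J \<longrightarrow> \<not> c) \<and> (\<forall>k\<in>J'. bt r k = c))"
      using bt_lo J'_def by auto
    then show ?thesis using Lo_def B_def by auto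
  qed
  have Hi_eq: "Hi = (if M \<in> J \<and> \<not> c then {} else B)"
  proof -
    have "\<And>r. r < 2^M \<Longrightarrow> (\<forall>k\<in>J. bt (r + 2^M) k = c) = ((M \<in> J \<longrightarrow> c) \<and> (\<forall>k\<in>J'. bt r k = c))"
    proof -
      fix r :: nat assume r: "r < 2^M"
      have "\<And>k. k \<in> J' \<Longrightarrow> bt (r + 2^M) k = bt r k" using bt_hi[OF r] J'_def by auto
      moreover have "bt (r + 2^M) M" using bt_hi[OF r] by simp
      ultimately show "(\<forall>k\<in>J. bt (r + 2^M) k = c) = ((M \<in> J \<longrightarrow> c) \<and> (\<forall>k\<in>J'. bt r k = c))"
        using J'_def by auto
    qed
    then show ?thesis using Hi_def B_def by auto
  qed
  have fin: "finite Lo" "finite ((\<lambda>r. r + 2^M) ` Hi)" using Lo_def Hi_def by auto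
  have tot: "card {r\<in>{..<(2::nat)^Suc M}. \<forall>k\<in>J. bt r k = c} = card Lo + card Hi"
  proof -
    have "card (Lo \<union> (\<lambda>r. r + 2^M) ` Hi) = card Lo + card ((\<lambda>r. r + 2^M) ` Hi)"
      by (rule card_Un_disjoint[OF fin disj])
    then show ?thesis unfolding split cHi .
  qed
  show ?case
  proof (cases "M \<in> J")
    case True
    then have "card J = Suc (card J')" unfolding J'_def using fJ True card_Suc_Diff1 by metis
    then show ?thesis using tot Lo_eq Hi_eq cB True by (cases c) auto
  next
    case False
    then have "J' = J" using J'_def by auto
    then have "card J \<le> M" using cJ' by simp
    then have "(2::nat)^(Suc M - card J) = 2 * 2^(M - card J)"
      by (simp add: Suc_diff_le)
    then show ?thesis using tot Lo_eq Hi_eq cB False \<open>J' = J\<close> by auto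
  qed
qed

lemma range_count:
  assumes "J \<subseteq> {..<M}"
  shows "card {x\<in>{..<t}. \<forall>k\<in>J. bt x k = c} \<le> 2^(M - card J) * (t div 2^M + 1)"
proof -
  define R where "R = {r\<in>{..<(2::nat)^M}. \<forall>k\<in>J. bt r k = c}"
  have cR: "card R = 2^(M - card J)" using block_count[OF assms] R_def by simp
  define A where "A = (\<lambda>r. {x\<in>{..<t}. x mod 2^M = r})"
  have sub: "{x\<in>{..<t}. \<forall>k\<in>J. bt x k = c} \<subseteq> (\<Union>r\<in>R. A r)"
  proof
    fix x assume x: "x \<in> {x\<in>{..<t}. \<forall>k\<in>J. bt x k = c}"
    have "\<forall>k\<in>J. bt (x mod 2^M) k = c" using x assms bt_mod by auto
    then have "x mod 2^M \<in> R" unfolding R_def by simp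
    moreover have "x \<in> A (x mod 2^M)" using x A_def by simp
    ultimately show "x \<in> (\<Union>r\<in>R. A r)" by blast
  qed
  have cA: "card (A r) \<le> t div 2^M + 1" for r
  proof -
    have "A r \<subseteq> (\<lambda>q. q * 2^M + r) ` {..t div 2^M}"
    proof
      fix x assume x: "x \<in> A r"
      then have "x = (x div 2^M) * 2^M + r" "x div 2^M \<le> t div 2^M" using A_def
        by (auto simp: div_le_mono) (metis div_mult_mod_eq)
      then show "x \<in> (\<lambda>q. q * 2^M + r) ` {..t div 2^M}" by blast
    qed
    then have "card (A r) \<le> card ((\<lambda>q. q * 2^M + r) ` {..t div 2^M})" by (simp add: card_mono)
    also have "\<dots> \<le> card {..t div 2^M}" by (rule card_image_le) simp
    finally show ?thesis by simp
  qed
  have "card {x\<in>{..<t}. \<forall>k\<in>J. bt x k = c} \<le> card (\<Union>r\<in>R. A r)"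
  proof (rule card_mono[OF _ sub])
    show "finite (\<Union>r\<in>R. A r)" unfolding A_def R_def by (intro finite_UN_I) auto
  qed
  also have "\<dots> \<le> (\<Sum>r\<in>R. card (A r))" by (rule card_UN_le) (simp add: R_def)
  also have "\<dots> \<le> (\<Sum>r\<in>R. t div 2^M + 1)" by (rule sum_mono) (rule cA)
  also have "\<dots> = card R * (t div 2^M + 1)" by simp
  finally show ?thesis using cR by simp
qed

lemma density_le:
  assumes "\<And>t. t \<ge> 1 \<Longrightarrow> real (card (A \<inter> {1..t})) \<le> e * real t + C"
  shows "upper_density A \<le> ereal e"
proof -
  have ev: "eventually (\<lambda>t. ereal (real (card (A \<inter> {1..t})) / real t) \<le> ereal (e + C / real t)) sequentially"
  proof (rule eventually_sequentiallyI[of 1])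
    fix t :: nat assume t: "t \<ge> 1"
    have "real (card (A \<inter> {1..t})) / real t \<le> (e * real t + C) / real t"
      using assms[OF t] t by (simp add: divide_right_mono)
    also have "\<dots> = e + C / real t" using t by (simp add: field_simps)
    finally show "ereal (real (card (A \<inter> {1..t})) / real t) \<le> ereal (e + C / real t)" by simp
  qed
  have lim: "(\<lambda>t. ereal (e + C / real t)) \<longlonglongrightarrow> ereal e"
  proof -
    have "(\<lambda>t. C / real t) \<longlonglongrightarrow> 0" by (rule lim_const_over_n)
    then have "(\<lambda>t. e + C / real t) \<longlonglongrightarrow> e + 0" by (rule tendsto_add[OF tendsto_const])
    then show ?thesis by (intro tendsto_ereal) simp
  qed
  have "upper_density A \<le> limsup (\<lambda>t. ereal (e + C / real t))"
    unfolding upper_density_def by (rule Limsup_mono[OF ev])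
  also have "\<dots> = ereal e" by (rule lim_imp_Limsup[OF _ lim]) simp
  finally show ?thesis .
qed

lemma density_nonneg: "upper_density A \<ge> 0"
  unfolding upper_density_def
  by (rule le_Limsup) (auto)

lemma density_mono: "A \<subseteq> B \<Longrightarrow> upper_density A \<le> upper_density B"
  unfolding upper_density_def
proof (rule Limsup_mono[OF always_eventually], rule allI)
  fix t assume "A \<subseteq> B"
  then have "card (A \<inter> {1..t}) \<le> card (B \<inter> {1..t})" by (intro card_mono) auto
  then show "ereal (real (card (A \<inter> {1..t})) / real t) \<le> ereal (real (card (B \<inter> {1..t})) / real t)"
    by (simp add: divide_right_mono)
qed

lemma density_Un: "upper_density (A \<union> B) \<le> upper_density A + upper_density B"
proof -
  have "upper_density (A \<union> B) \<le> limsup (\<lambda>t. ereal (real (card (A \<inter> {1..t})) / real t) + ereal (real (card (B \<inter> {1..t})) / real t))"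
    unfolding upper_density_def
  proof (rule Limsup_mono[OF always_eventually], rule allI)
    fix t
    have "card ((A \<union> B) \<inter> {1..t}) \<le> card (A \<inter> {1..t}) + card (B \<inter> {1..t})"
      by (metis Int_Un_distrib2 card_Un_le)
    then have "real (card ((A \<union> B) \<inter> {1..t})) / real t \<le> (real (card (A \<inter> {1..t})) + real (card (B \<inter> {1..t}))) / real t"
      by (intro divide_right_mono) auto
    then show "ereal (real (card ((A \<union> B) \<inter> {1..t})) / real t) \<le> ereal (real (card (A \<inter> {1..t})) / real t) + ereal (real (card (B \<inter> {1..t})) / real t)"
      by (simp add: add_divide_distrib)
  qed
  also have "\<dots> \<le> upper_density A + upper_density B" unfolding upper_density_def by (rule ereal_limsup_add_mono)
  finally show ?thesis .
qed

lemma density_finite: "finite A \<Longrightarrow> upper_density A = 0"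
proof -
  assume f: "finite A"
  have "upper_density A \<le> ereal 0"
  proof (rule density_le[where C = "real (card A)"])
    fix t :: nat
    have "card (A \<inter> {1..t}) \<le> card A" using f by (intro card_mono) auto
    then show "real (card (A \<inter> {1..t})) \<le> 0 * real t + real (card A)" by simp
  qed
  then show ?thesis using density_nonneg[of A] by (simp add: zero_ereal_def)
qed

lemma density_pos_infinite: "upper_density A > 0 \<Longrightarrow> infinite A"
  using density_finite by fastforce

lemma density_all: "upper_density {1..} \<ge> 1"
  unfolding upper_density_def
proof (rule le_Limsup)
  show "eventually (\<lambda>t. 1 \<le> ereal (real (card ({1..} \<inter> {1..t})) / real t)) sequentially"
  proof (rule eventually_sequentiallyI[of 1])
    fix t :: nat assume "t \<ge> 1"
    moreover have "{1..} \<inter> {1..t} = {1..t}" by auto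
    ultimately show "1 \<le> ereal (real (card ({1..} \<inter> {1..t})) / real t)" by simp
  qed
qed simp

definition phib :: coloring where "phib S = bt (Max S) (Min S)"

lemma nb_density:
  assumes "finite J"
  shows "upper_density {w. \<forall>a\<in>J. phib {w, a} = c} \<le> ereal (1 / 2 ^ card J)"
proof -
  define M where "M = Suc (Max (insert 0 J))"
  have JM: "J \<subseteq> {..<M}" using assms unfolding M_def by (auto simp: less_Suc_eq_le)
  have cJ: "card J \<le> M" using JM by (metis card_lessThan card_mono finite_lessThan)
  define W where "W = {w. \<forall>a\<in>J. phib {w, a} = c}"
  have sub: "W \<subseteq> {..<M} \<union> {x. \<forall>k\<in>J. bt x k = c}"
  proof
    fix w assume w: "w \<in> W"
    show "w \<in> {..<M} \<union> {x. \<forall>k\<in>J. bt x k = c}"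
    proof (cases "w < M")
      case False
      have "bt w k = c" if k: "k \<in> J" for k
      proof -
        have "k < w" using k JM False by auto
        then have "Max {w, k} = w" "Min {w, k} = k" by auto
        then show ?thesis using w k unfolding W_def phib_def by auto
      qed
      then show ?thesis by simp
    qed simp
  qed
  have "upper_density W \<le> ereal (1 / 2 ^ card J)"
  proof (rule density_le[where C = "real M + 1 / 2 ^ card J + 2 ^ (M - card J)"])
    fix t :: nat assume "t \<ge> 1"
    have "W \<inter> {1..t} \<subseteq> {..<M} \<union> {x\<in>{..<Suc t}. \<forall>k\<in>J. bt x k = c}" using sub by auto
    then have "card (W \<inter> {1..t}) \<le> card ({..<M} \<union> {x\<in>{..<Suc t}. \<forall>k\<in>J. bt x k = c})"
      by (intro card_mono) auto
    also have "\<dots> \<le> M + card {x\<in>{..<Suc t}. \<forall>k\<in>J. bt x k = c}"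
      using card_Un_le[of "{..<M}" "{x\<in>{..<Suc t}. \<forall>k\<in>J. bt x k = c}"] by simp
    also have "\<dots> \<le> M + 2^(M - card J) * (Suc t div 2^M + 1)"
      using range_count[OF JM] by simp
    finally have "real (card (W \<inter> {1..t})) \<le> real (M + 2^(M - card J) * (Suc t div 2^M + 1))"
      by (rule of_nat_mono)
    then have c1: "real (card (W \<inter> {1..t})) \<le> real M + 2^(M - card J) * (real (Suc t div 2^M) + 1)"
      by (simp add: algebra_simps)
    have "real (Suc t div 2^M) \<le> real (Suc t) / 2^M"
      using of_nat_div_le_of_nat[of "Suc t" "2^M", where 'a=real] by simp
    then have "(2::real)^(M - card J) * (real (Suc t div 2^M) + 1) \<le> 2^(M - card J) * (real (Suc t) / 2^M + 1)"
      by (intro mult_left_mono) auto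
    also have "\<dots> = real (Suc t) / 2 ^ card J + 2^(M - card J)"
      using cJ by (simp add: power_diff field_simps)
    finally have q: "(2::real)^(M - card J) * (real (Suc t div 2^M) + 1) \<le> real (Suc t) / 2 ^ card J + 2^(M - card J)" .
    have "real (Suc t) / 2 ^ card J = 1 / 2 ^ card J * real t + 1 / 2 ^ card J"
      by (simp add: add_divide_distrib)
    then show "real (card (W \<inter> {1..t})) \<le> 1 / 2 ^ card J * real t + (real M + 1 / 2 ^ card J + 2 ^ (M - card J))"
      using c1 q by linarith
  qed
  then show ?thesis unfolding W_def .
qed

lemma ereal_le_small:
  assumes "\<And>j::nat. (x::ereal) \<le> ereal (2 / 2^j)" shows "x \<le> 0"
proof (rule ccontr)
  assume "\<not> x \<le> 0"
  then have xp: "x > 0" by simp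
  have "x \<le> ereal 2" using assms[of 0] by simp
  then obtain r where r: "x = ereal r" using xp by (cases x) auto
  then have rp: "r > 0" using xp by simp
  obtain j where j: "(1/2::real)^j < r/2" using real_arch_pow_inv[of "r/2" "1/2"] rp by auto
  have "r \<le> 2 / 2^j" using assms[of j] r by simp
  also have "\<dots> = 2 * (1/2)^j" by (simp add: power_divide)
  also have "\<dots> < r" using j by simp
  finally show False by simp
qed

lemma nb_zero:
  assumes "infinite A"
  shows "upper_density {w. \<forall>a\<in>A. phib {w, a} = c} \<le> ereal (1 / 2^j)"
proof -
  obtain J where J: "J \<subseteq> A" "finite J" "card J = j" using infinite_arbitrarily_large[OF assms] by blast
  have "{w. \<forall>a\<in>A. phib {w, a} = c} \<subseteq> {w. \<forall>a\<in>J. phib {w, a} = c}" using J by auto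
  then have "upper_density {w. \<forall>a\<in>A. phib {w, a} = c} \<le> upper_density {w. \<forall>a\<in>J. phib {w, a} = c}"
    by (rule density_mono)
  also have "\<dots> \<le> ereal (1 / 2 ^ card J)" by (rule nb_density[OF J(2)])
  finally show ?thesis using J by simp
qed

lemma part1_core:
  assumes T: "infinite T1" "infinite T2" "T1 \<subseteq> V" "T2 \<subseteq> V"
    and sep: "\<forall>x\<in>V. (\<forall>y\<in>T1. p x \<noteq> p y) \<or> (\<forall>y\<in>T2. p x \<noteq> p y)"
    and mc: "mono_copy phib V p f"
  shows "upper_density (f ` V) = 0"
proof -
  obtain c where c: "\<forall>u\<in>V. \<forall>v\<in>V. p u \<noteq> p v \<longrightarrow> phib {f u, f v} = c"
    and inj: "inj_on f V" using mc unfolding mono_copy_def by blast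
  define N where "N = (\<lambda>A. {w. \<forall>a\<in>A. phib {w, a} = c})"
  have sub: "f ` V \<subseteq> N (f ` T1) \<union> N (f ` T2)"
  proof
    fix w assume "w \<in> f ` V"
    then obtain x where x: "x \<in> V" "w = f x" by blast
    show "w \<in> N (f ` T1) \<union> N (f ` T2)"
    proof (cases "\<forall>y\<in>T1. p x \<noteq> p y")
      case True
      then have "w \<in> N (f ` T1)" unfolding N_def using x c T(3) by blast
      then show ?thesis by simp
    next
      case False
      then have "\<forall>y\<in>T2. p x \<noteq> p y" using sep x by blast
      then have "w \<in> N (f ` T2)" unfolding N_def using x c T(4) by blast
      then show ?thesis by simp
    qed
  qed
  have i1: "infinite (f ` T1)" using T(1,3) inj by (meson finite_imageD inj_on_subset)
  have i2: "infinite (f ` T2)" using T(2,4) inj by (meson finite_imageD inj_on_subset)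
  have "upper_density (f ` V) \<le> ereal (2 / 2^j)" for j
  proof -
    have "upper_density (f ` V) \<le> upper_density (N (f ` T1) \<union> N (f ` T2))" by (rule density_mono[OF sub])
    also have "\<dots> \<le> upper_density (N (f ` T1)) + upper_density (N (f ` T2))" by (rule density_Un)
    also have "\<dots> \<le> ereal (1/2^j) + ereal (1/2^j)"
      unfolding N_def by (intro add_mono nb_zero i1 i2)
    also have "\<dots> = ereal (2 / 2^j)" by simp
    finally show ?thesis .
  qed
  then have "upper_density (f ` V) \<le> 0" by (rule ereal_le_small)
  then show ?thesis using density_nonneg[of "f ` V"] by simp
qed

definition good :: "coloring \<Rightarrow> nat \<Rightarrow> nat \<Rightarrow> bool" where
  "good \<phi> a b \<longleftrightarrow> (\<forall>X (\<delta>::real). X \<subseteq> {1..} \<longrightarrow> 0 < \<delta> \<longrightarrow> ereal \<delta> \<le> upper_density X \<longrightarrow>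
     (\<exists>c F Y. F \<subseteq> X \<and> Y \<subseteq> X \<and> F \<inter> Y = {} \<and> finite F \<and> card F = (if c then a else b) \<and>
        ereal (\<delta> / 2^(a+b-1)) \<le> upper_density Y \<and> (\<forall>x\<in>F. \<forall>y\<in>F \<union> Y. x \<noteq> y \<longrightarrow> \<phi> {x,y} = c)))"

lemma good0a: "good \<phi> 0 b"
  unfolding good_def
proof (intro allI impI)
  fix X and \<delta> :: real assume A: "X \<subseteq> {1..}" "0 < \<delta>" "ereal \<delta> \<le> upper_density X"
  have h: "\<delta> / 2^(0+b-1) \<le> \<delta>" using \<open>0 < \<delta>\<close> by (simp add: divide_le_eq)
  then have h': "ereal (\<delta> / 2^(0+b-1)) \<le> upper_density X" using A(3) by (metis ereal_less_eq(3) order_trans)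
  show "\<exists>c F Y. F \<subseteq> X \<and> Y \<subseteq> X \<and> F \<inter> Y = {} \<and> finite F \<and> card F = (if c then 0 else b) \<and>
        ereal (\<delta> / 2^(0+b-1)) \<le> upper_density Y \<and> (\<forall>x\<in>F. \<forall>y\<in>F \<union> Y. x \<noteq> y \<longrightarrow> \<phi> {x,y} = c)"
    apply (rule exI[of _ True], rule exI[of _ "{}"], rule exI[of _ X])
    using A h' by auto
qed

lemma good0b: "good \<phi> a 0"
  unfolding good_def
proof (intro allI impI)
  fix X and \<delta> :: real assume A: "X \<subseteq> {1..}" "0 < \<delta>" "ereal \<delta> \<le> upper_density X"
  have h: "\<delta> / 2^(a+0-1) \<le> \<delta>" using \<open>0 < \<delta>\<close> by (simp add: divide_le_eq)
  then have h': "ereal (\<delta> / 2^(a+0-1)) \<le> upper_density X" using A(3) by (metis ereal_less_eq(3) order_trans)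
  show "\<exists>c F Y. F \<subseteq> X \<and> Y \<subseteq> X \<and> F \<inter> Y = {} \<and> finite F \<and> card F = (if c then a else 0) \<and>
        ereal (\<delta> / 2^(a+0-1)) \<le> upper_density Y \<and> (\<forall>x\<in>F. \<forall>y\<in>F \<union> Y. x \<noteq> y \<longrightarrow> \<phi> {x,y} = c)"
    apply (rule exI[of _ False], rule exI[of _ "{}"], rule exI[of _ X])
    using A h' by auto
qed

lemma ereal_half:
  assumes "ereal \<delta> \<le> A + B" "A \<ge> 0" "B \<ge> 0"
  shows "ereal (\<delta>/2) \<le> A \<or> ereal (\<delta>/2) \<le> B"
proof (rule ccontr)
  assume "\<not> ?thesis"
  then have a: "A < ereal (\<delta>/2)" and b: "B < ereal (\<delta>/2)" by auto
  obtain ra where ra: "A = ereal ra" using a assms(2) by (cases A) auto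
  obtain rb where rb: "B = ereal rb" using b assms(3) by (cases B) auto
  show False using a b assms(1) ra rb by simp
qed

lemma good_step:
  assumes ga: "good \<phi> a (Suc b)" and gb: "good \<phi> (Suc a) b"
  shows "good \<phi> (Suc a) (Suc b)"
  unfolding good_def
proof (intro allI impI)
  fix X and \<delta> :: real assume X: "X \<subseteq> {1..}" and dp: "0 < \<delta>" and dX: "ereal \<delta> \<le> upper_density X"
  have "upper_density X > 0" using dX dp by (metis ereal_less(2) order_less_le_trans)
  then have "infinite X" by (rule density_pos_infinite)
  then obtain v where v: "v \<in> X" by (metis ex_in_conv finite.emptyI)
  define R where "R = {y\<in>X - {v}. \<phi> {v, y}}"
  define B where "B = {y\<in>X - {v}. \<not> \<phi> {v, y}}"
  have "X \<subseteq> ({v} \<union> R) \<union> B" unfolding R_def B_def by auto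
  then have "upper_density X \<le> upper_density (({v} \<union> R) \<union> B)" by (rule density_mono)
  also have "\<dots> \<le> upper_density ({v} \<union> R) + upper_density B" by (rule density_Un)
  also have "\<dots> \<le> (upper_density {v} + upper_density R) + upper_density B" by (intro add_mono density_Un order_refl)
  also have "\<dots> = upper_density R + upper_density B" using density_finite[of "{v}"] by simp
  finally have "ereal \<delta> \<le> upper_density R + upper_density B" using dX by simp
  then have half: "ereal (\<delta>/2) \<le> upper_density R \<or> ereal (\<delta>/2) \<le> upper_density B"
    by (rule ereal_half[OF _ density_nonneg density_nonneg])
  have dp2: "0 < \<delta>/2" using dp by simp
  have ex: "\<delta> / 2 / 2 ^ (a + Suc b - 1) = \<delta> / 2 ^ (Suc a + Suc b - 1)"
           "\<delta> / 2 / 2 ^ (Suc a + b - 1) = \<delta> / 2 ^ (Suc a + Suc b - 1)" by simp_all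
  show "\<exists>c F Y. F \<subseteq> X \<and> Y \<subseteq> X \<and> F \<inter> Y = {} \<and> finite F \<and> card F = (if c then Suc a else Suc b) \<and>
        ereal (\<delta> / 2^(Suc a + Suc b - 1)) \<le> upper_density Y \<and> (\<forall>x\<in>F. \<forall>y\<in>F \<union> Y. x \<noteq> y \<longrightarrow> \<phi> {x,y} = c)"
  proof (cases "ereal (\<delta>/2) \<le> upper_density R")
    case True
    have RX: "R \<subseteq> {1..}" using X R_def by auto
    obtain c F Y where F: "F \<subseteq> R" "Y \<subseteq> R" "F \<inter> Y = {}" "finite F" "card F = (if c then a else Suc b)"
      "ereal (\<delta>/2 / 2^(a + Suc b - 1)) \<le> upper_density Y" "\<forall>x\<in>F. \<forall>y\<in>F \<union> Y. x \<noteq> y \<longrightarrow> \<phi> {x,y} = c"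
      using ga[unfolded good_def, rule_format, OF RX dp2 True] by blast
    have vF: "v \<notin> F" "v \<notin> Y" using F(1,2) R_def by auto
    show ?thesis
    proof (cases c)
      case True
      have col: "\<forall>x\<in>insert v F. \<forall>y\<in>insert v F \<union> Y. x \<noteq> y \<longrightarrow> \<phi> {x,y} = c"
      proof (intro ballI impI)
        fix x y assume x: "x \<in> insert v F" and y: "y \<in> insert v F \<union> Y" and xy: "x \<noteq> y"
        show "\<phi> {x,y} = c"
        proof (cases "x = v")
          case True
          then have "y \<in> R" using y xy F(1,2) by auto
          then show ?thesis using True \<open>c\<close> R_def by auto
        next
          case False
          then have xF: "x \<in> F" using x by simp
          show ?thesis
          proof (cases "y = v")
            case True
            have "x \<in> R" using xF F(1) by auto
            then have "\<phi> {v, x}" using R_def by simp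
            then show ?thesis using True \<open>c\<close> by (simp add: insert_commute)
          next
            case False
            then show ?thesis using F(7) xF y xy by auto
          qed
        qed
      qed
      show ?thesis
        apply (rule exI[of _ c], rule exI[of _ "insert v F"], rule exI[of _ Y])
        using F vF v True col ex R_def by auto
    next
      case False
      show ?thesis
        apply (rule exI[of _ c], rule exI[of _ F], rule exI[of _ Y])
        using F False ex R_def by auto
    qed
  next
    case False
    then have BD: "ereal (\<delta>/2) \<le> upper_density B" using half by simp
    have BX: "B \<subseteq> {1..}" using X B_def by auto
    obtain c F Y where F: "F \<subseteq> B" "Y \<subseteq> B" "F \<inter> Y = {}" "finite F" "card F = (if c then Suc a else b)"
      "ereal (\<delta>/2 / 2^(Suc a + b - 1)) \<le> upper_density Y" "\<forall>x\<in>F. \<forall>y\<in>F \<union> Y. x \<noteq> y \<longrightarrow> \<phi> {x,y} = c"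
      using gb[unfolded good_def, rule_format, OF BX dp2 BD] by blast
    have vF: "v \<notin> F" "v \<notin> Y" using F(1,2) B_def by auto
    show ?thesis
    proof (cases c)
      case False
      have col: "\<forall>x\<in>insert v F. \<forall>y\<in>insert v F \<union> Y. x \<noteq> y \<longrightarrow> \<phi> {x,y} = c"
      proof (intro ballI impI)
        fix x y assume x: "x \<in> insert v F" and y: "y \<in> insert v F \<union> Y" and xy: "x \<noteq> y"
        show "\<phi> {x,y} = c"
        proof (cases "x = v")
          case True
          then have "y \<in> B" using y xy F(1,2) by auto
          then show ?thesis using True \<open>\<not> c\<close> B_def by auto
        next
          case False
          then have xF: "x \<in> F" using x by simp
          show ?thesis
          proof (cases "y = v")
            case True
            have "x \<in> B" using xF F(1) by auto
            then have "\<not> \<phi> {v, x}" using B_def by simp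
            then show ?thesis using True \<open>\<not> c\<close> by (simp add: insert_commute)
          next
            case False
            then show ?thesis using F(7) xF y xy by auto
          qed
        qed
      qed
      show ?thesis
        apply (rule exI[of _ c], rule exI[of _ "insert v F"], rule exI[of _ Y])
        using F vF v False col ex B_def by auto
    next
      case True
      show ?thesis
        apply (rule exI[of _ c], rule exI[of _ F], rule exI[of _ Y])
        using F True ex B_def by auto
    qed
  qed
qed

lemma good_all: "good \<phi> a b"
proof (induction a arbitrary: b)
  case 0
  then show ?case by (rule good0a)
next
  case (Suc a)
  note IHa = Suc.IH
  show ?case
  proof (induction b)
    case 0
    then show ?case by (rule good0b)
  next
    case (Suc b)
    then show ?case using good_step IHa by blast
  qed
qed

lemma part2_lower:
  fixes V :: "'a set" and p :: "'a \<Rightarrow> 'b" and \<phi> :: coloring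
  assumes cV: "countable V" and u: "u \<in> V" "infinite (part_of V p u)"
    and uniq: "\<forall>v\<in>V. infinite (part_of V p v) \<longrightarrow> p v = p u"
    and fin: "finite {v\<in>V. finite (part_of V p v)}" and cn: "card {v\<in>V. finite (part_of V p v)} = n"
  shows "ereal (1 / 2 ^ (2 * n - 1)) \<le> Rd_col \<phi> V p"
proof -
  define Fin where "Fin = {v\<in>V. finite (part_of V p v)}"
  define P where "P = part_of V p u"
  have X: "{1::nat..} \<subseteq> {1..}" by simp
  have d1: "ereal 1 \<le> upper_density {1::nat..}" using density_all by (simp add: one_ereal_def)
  obtain c F Y where F: "F \<subseteq> {1..}" "Y \<subseteq> {1..}" "F \<inter> Y = {}" "finite F" "card F = (if c then n else n)"
      "ereal (1 / 2^(n+n-1)) \<le> upper_density Y" "\<forall>x\<in>F. \<forall>y\<in>F \<union> Y. x \<noteq> y \<longrightarrow> \<phi> {x,y} = c"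
    using good_all[of \<phi> n n, unfolded good_def, rule_format, OF X _ d1] by auto
  have cF: "card F = n" using F(5) by simp
  have "upper_density Y > 0" using F(6) by (metis ereal_less(2) order_less_le_trans zero_less_divide_1_iff zero_less_numeral zero_less_power)
  then have iY: "infinite Y" by (rule density_pos_infinite)
  have VFP: "V = Fin \<union> P"
  proof
    show "V \<subseteq> Fin \<union> P"
    proof
      fix v assume v: "v \<in> V"
      show "v \<in> Fin \<union> P"
      proof (cases "finite (part_of V p v)")
        case True then show ?thesis using v Fin_def by simp
      next
        case False then have "p v = p u" using uniq v by blast
        then show ?thesis using v unfolding P_def part_of_def by simp
      qed
    qed
    show "Fin \<union> P \<subseteq> V" unfolding Fin_def P_def part_of_def by auto
  qed
  have disj: "Fin \<inter> P = {}"
  proof (rule ccontr)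
    assume "Fin \<inter> P \<noteq> {}"
    then obtain v where v: "v \<in> Fin" "v \<in> P" by blast
    then have "p v = p u" unfolding P_def part_of_def by simp
    then have "part_of V p v = part_of V p u" unfolding part_of_def by simp
    then show False using v(1) u(2) Fin_def by simp
  qed
  have pP: "\<And>x. x \<in> P \<Longrightarrow> p x = p u" unfolding P_def part_of_def by simp
  have fFin: "finite Fin" using fin unfolding Fin_def .
  have cFin: "card Fin = card F" using cn cF unfolding Fin_def by simp
  obtain g where g: "bij_betw g Fin F" using finite_same_card_bij[OF fFin F(4) cFin] by blast
  have PV: "P \<subseteq> V" using VFP by blast
  have cP: "countable P" by (rule countable_subset[OF PV cV])
  have iP: "infinite P" using u(2) P_def by simp
  obtain e1 where e1: "bij_betw e1 P (UNIV::nat set)" using countableE_infinite[OF cP iP] by blast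
  obtain e2 where e2: "bij_betw e2 Y (UNIV::nat set)" using countableE_infinite[OF countable_subset[OF subset_UNIV countableI_type] iY] by blast
  define h where "h = inv_into Y e2 \<circ> e1"
  have h: "bij_betw h P Y" unfolding h_def by (rule bij_betw_trans[OF e1 bij_betw_inv_into[OF e2]])
  define f where "f = (\<lambda>x. if x \<in> Fin then g x else h x)"
  have fF: "f x \<in> F" if x: "x \<in> Fin" for x
  proof -
    have "f x = g x" using x f_def by simp
    then show ?thesis using bij_betwE[OF g] x by simp
  qed
  have fY: "f x \<in> Y" if x: "x \<in> P" for x
  proof -
    have "x \<notin> Fin" using x disj by blast
    then have "f x = h x" using f_def by simp
    then show ?thesis using bij_betwE[OF h] x by simp
  qed
  have imgY: "Y \<subseteq> f ` V"
  proof
    fix y assume "y \<in> Y"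
    then obtain x where "x \<in> P" "h x = y" using h by (metis bij_betw_imp_surj_on imageE)
    moreover have "f x = h x" using \<open>x \<in> P\<close> disj f_def by auto
    ultimately show "y \<in> f ` V" using VFP by (intro image_eqI[of y f x]) auto
  qed
  have inj: "inj_on f V"
  proof (rule inj_onI)
    fix x y assume x: "x \<in> V" and y: "y \<in> V" and e: "f x = f y"
    show "x = y"
    proof (cases "x \<in> Fin")
      case True
      show ?thesis
      proof (cases "y \<in> Fin")
        case True
        have "g x = g y" using e True \<open>x \<in> Fin\<close> f_def by simp
        then show ?thesis using inj_onD[OF bij_betw_imp_inj_on[OF g]] True \<open>x \<in> Fin\<close> by blast
      next
        case False
        then have "y \<in> P" using y VFP by blast
        then have "f y \<in> Y" by (rule fY)
        moreover have "f x \<in> F" using \<open>x \<in> Fin\<close> by (rule fF)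
        ultimately show ?thesis using e F(3) by auto
      qed
    next
      case False
      then have xP: "x \<in> P" using x VFP by blast
      show ?thesis
      proof (cases "y \<in> Fin")
        case True
        then have "f y \<in> F" by (rule fF)
        moreover have "f x \<in> Y" using xP by (rule fY)
        ultimately show ?thesis using e F(3) by auto
      next
        case False
        then have "y \<in> P" using y VFP by blast
        have "h x = h y" using e False \<open>x \<notin> Fin\<close> f_def by simp
        then show ?thesis using inj_onD[OF bij_betw_imp_inj_on[OF h]] xP \<open>y \<in> P\<close> by blast
      qed
    qed
  qed
  have sub1: "f ` V \<subseteq> {1..}"
  proof
    fix w assume "w \<in> f ` V"
    then obtain x where x: "x \<in> V" "w = f x" by blast
    then have "x \<in> Fin \<or> x \<in> P" using VFP by blast
    then show "w \<in> {1..}" using fF fY F(1,2) x(2) by blast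
  qed
  have col: "\<forall>x\<in>V. \<forall>y\<in>V. p x \<noteq> p y \<longrightarrow> \<phi> {f x, f y} = c"
  proof (intro ballI impI)
    fix x y assume x: "x \<in> V" and y: "y \<in> V" and pxy: "p x \<noteq> p y"
    have xy: "x \<noteq> y" using pxy by blast
    then have fxy: "f x \<noteq> f y" using inj x y by (meson inj_onD)
    show "\<phi> {f x, f y} = c"
    proof (cases "x \<in> Fin")
      case True
      have "f y \<in> F \<union> Y" using y VFP fF fY by blast
      then show ?thesis using F(7) fF[OF True] fxy by blast
    next
      case False
      then have "x \<in> P" using x VFP by blast
      then have "y \<notin> P" using pP pxy by metis
      then have yF: "y \<in> Fin" using y VFP by blast
      have "f x \<in> F \<union> Y" using x VFP fF fY by blast
      then have "\<phi> {f y, f x} = c" using F(7) fF[OF yF] fxy by metis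
      then show ?thesis by (simp add: insert_commute)
    qed
  qed
  have mc: "mono_copy \<phi> V p f" unfolding mono_copy_def using inj sub1 col by blast
  have "ereal (1 / 2 ^ (2 * n - 1)) \<le> upper_density Y" using F(6) by (simp add: mult_2)
  also have "\<dots> \<le> upper_density (f ` V)" by (rule density_mono[OF imgY])
  also have "\<dots> \<le> Rd_col \<phi> V p" unfolding Rd_col_def by (rule Sup_upper) (use mc in blast)
  finally show ?thesis .
qed

lemma part2_upper:
  fixes V :: "'a set" and p :: "'a \<Rightarrow> 'b"
  assumes u: "u \<in> V" "infinite (part_of V p u)"
    and uniq: "\<forall>v\<in>V. infinite (part_of V p v) \<longrightarrow> p v = p u"
    and fin0: "finite {v\<in>V. finite (part_of V p v)}"
    and cn: "card {v\<in>V. finite (part_of V p v)} = n"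
  shows "Rd2 V p \<le> ereal (1 / 2 ^ n)"
proof -
  define Fin where "Fin = {v\<in>V. finite (part_of V p v)}"
  have FinV: "Fin \<subseteq> V" unfolding Fin_def by auto
  have fin: "finite Fin" using fin0 unfolding Fin_def .
  have key: "upper_density (f ` V) \<le> ereal (1 / 2 ^ n)" if mc: "mono_copy phib V p f" for f
  proof -
    obtain c where c: "\<forall>x\<in>V. \<forall>y\<in>V. p x \<noteq> p y \<longrightarrow> phib {f x, f y} = c"
      and inj: "inj_on f V" using mc unfolding mono_copy_def by blast
    define N where "N = {w. \<forall>a\<in>f ` Fin. phib {w, a} = c}"
    have sub: "f ` V \<subseteq> f ` Fin \<union> N"
    proof
      fix w assume "w \<in> f ` V"
      then obtain x where x: "x \<in> V" "w = f x" by blast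
      show "w \<in> f ` Fin \<union> N"
      proof (cases "x \<in> Fin")
        case True then show ?thesis using x by blast
      next
        case False
        then have "infinite (part_of V p x)" using x Fin_def by simp
        then have px: "p x = p u" using uniq x by blast
        have "phib {w, a} = c" if a: "a \<in> f ` Fin" for a
        proof -
          obtain y where y: "y \<in> Fin" "a = f y" using a by blast
          have "p x \<noteq> p y"
          proof
            assume "p x = p y"
            then have "part_of V p y = part_of V p u" using px unfolding part_of_def by simp
            then show False using y(1) u(2) Fin_def by simp
          qed
          then show ?thesis using c x y FinV by blast
        qed
        then show ?thesis using N_def by blast
      qed
    qed
    have cimg: "card (f ` Fin) = n" using card_image[OF inj_on_subset[OF inj FinV]] cn Fin_def by simp
    have "upper_density (f ` V) \<le> upper_density (f ` Fin \<union> N)" by (rule density_mono[OF sub])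
    also have "\<dots> \<le> upper_density (f ` Fin) + upper_density N" by (rule density_Un)
    also have "\<dots> = upper_density N" using density_finite[of "f ` Fin"] fin by simp
    also have "\<dots> \<le> ereal (1 / 2 ^ card (f ` Fin))" unfolding N_def by (rule nb_density) (use fin in simp)
    finally show ?thesis using cimg by simp
  qed
  have "Rd2 V p \<le> Rd_col phib V p" unfolding Rd2_def by (rule Inf_lower) blast
  also have "\<dots> \<le> ereal (1 / 2 ^ n)" unfolding Rd_col_def by (rule Sup_least) (use key in blast)
  finally show ?thesis .
qed

lemma part1_sep:
  fixes V :: "'a set" and p :: "'a \<Rightarrow> 'b"
  assumes cV: "countable V"
    and H: "(\<exists>u\<in>V. \<exists>v\<in>V. p u \<noteq> p v \<and> infinite (part_of V p u) \<and> infinite (part_of V p v))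
            \<or> infinite {v\<in>V. finite (part_of V p v)}"
  shows "\<exists>T1 T2. infinite T1 \<and> infinite T2 \<and> T1 \<subseteq> V \<and> T2 \<subseteq> V \<and>
          (\<forall>x\<in>V. (\<forall>y\<in>T1. p x \<noteq> p y) \<or> (\<forall>y\<in>T2. p x \<noteq> p y))"
  using H
proof
  assume "\<exists>u\<in>V. \<exists>v\<in>V. p u \<noteq> p v \<and> infinite (part_of V p u) \<and> infinite (part_of V p v)"
  then obtain u v where uv: "u \<in> V" "v \<in> V" "p u \<noteq> p v" "infinite (part_of V p u)" "infinite (part_of V p v)"
    by blast
  have "(\<forall>x\<in>V. (\<forall>y\<in>part_of V p u. p x \<noteq> p y) \<or> (\<forall>y\<in>part_of V p v. p x \<noteq> p y))"
    using uv(3) unfolding part_of_def by auto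
  moreover have "part_of V p u \<subseteq> V" "part_of V p v \<subseteq> V" unfolding part_of_def by auto
  ultimately show ?thesis using uv(4,5) by blast
next
  assume iQ: "infinite {v\<in>V. finite (part_of V p v)}"
  define Q where "Q = {v\<in>V. finite (part_of V p v)}"
  have QV: "Q \<subseteq> V" unfolding Q_def by auto
  have ipQ: "infinite (p ` Q)"
  proof
    assume fpQ: "finite (p ` Q)"
    have "Q \<subseteq> (\<Union>v\<in>Q. part_of V p v)" using QV unfolding part_of_def by auto
    moreover have "(\<Union>v\<in>Q. part_of V p v) = (\<Union>b\<in>p ` Q. {w\<in>V. p w = b})" unfolding part_of_def by auto
    moreover have "finite (\<Union>b\<in>p ` Q. {w\<in>V. p w = b})"
    proof (rule finite_UN_I[OF fpQ])
      fix b assume "b \<in> p ` Q"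
      then obtain v where v: "v \<in> Q" "b = p v" by blast
      then have "{w\<in>V. p w = b} = part_of V p v" unfolding part_of_def by simp
      then show "finite {w\<in>V. p w = b}" using v(1) Q_def by simp
    qed
    ultimately have "finite Q" by (metis finite_subset)
    then show False using iQ Q_def by simp
  qed
  have cpQ: "countable (p ` Q)" using countable_subset[OF QV cV] by simp
  obtain e where e: "bij_betw e (p ` Q) (UNIV::nat set)" using countableE_infinite[OF cpQ ipQ] by blast
  define T1 where "T1 = {v\<in>Q. even (e (p v))}"
  define T2 where "T2 = {v\<in>Q. odd (e (p v))}"
  have surj: "\<exists>v\<in>Q. e (p v) = n" for n
  proof -
    have "n \<in> e ` p ` Q" using e by (simp add: bij_betw_def)
    then show ?thesis by blast
  qed
  have inf_img: "infinite ((\<lambda>v. e (p v)) ` {v\<in>Q. P (e (p v))})" if iP: "infinite {n::nat. P n}" for P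
  proof -
    have "{n. P n} \<subseteq> (\<lambda>v. e (p v)) ` {v\<in>Q. P (e (p v))}"
    proof
      fix n assume "n \<in> {n. P n}"
      then show "n \<in> (\<lambda>v. e (p v)) ` {v\<in>Q. P (e (p v))}" using surj[of n] by force
    qed
    then show ?thesis using iP finite_subset by blast
  qed
  have ie: "infinite {n::nat. even n}"
    unfolding infinite_nat_iff_unbounded_le
  proof
    fix m :: nat show "\<exists>n\<ge>m. n \<in> {n. even n}" by (rule exI[of _ "2*m"]) auto
  qed
  have io: "infinite {n::nat. odd n}"
    unfolding infinite_nat_iff_unbounded_le
  proof
    fix m :: nat show "\<exists>n\<ge>m. n \<in> {n. odd n}" by (rule exI[of _ "2*m+1"]) auto
  qed
  have i1: "infinite T1" using inf_img[OF ie] T1_def by auto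
  have i2: "infinite T2" using inf_img[OF io] T2_def by auto
  have sep: "\<forall>x\<in>V. (\<forall>y\<in>T1. p x \<noteq> p y) \<or> (\<forall>y\<in>T2. p x \<noteq> p y)"
  proof (intro ballI, rule ccontr)
    fix x assume "\<not> ((\<forall>y\<in>T1. p x \<noteq> p y) \<or> (\<forall>y\<in>T2. p x \<noteq> p y))"
    then obtain y1 y2 where "y1 \<in> T1" "y2 \<in> T2" "p x = p y1" "p x = p y2" by blast
    then show False unfolding T1_def T2_def by auto
  qed
  have "T1 \<subseteq> V" "T2 \<subseteq> V" using QV T1_def T2_def by auto
  then show ?thesis using i1 i2 sep by blast
qed

theorem mainTheorem8:
  fixes V :: "'a set" and p :: "'a \<Rightarrow> 'b"
  assumes "countable V" and "infinite V"
  shows "(((\<exists>u\<in>V. \<exists>v\<in>V. p u \<noteq> p v \<and> infinite (part_of V p u) \<and> infinite (part_of V p v))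
            \<or> infinite {v\<in>V. finite (part_of V p v)})
          \<longrightarrow> (\<not> ramsey_dense V p \<and>
               (\<exists>\<phi>::coloring. \<forall>f. mono_copy \<phi> V p f \<longrightarrow> upper_density (f ` V) = 0)))
       \<and> (\<forall>n::nat. n \<ge> 1 \<longrightarrow>
          (\<exists>u\<in>V. infinite (part_of V p u) \<and>
             (\<forall>v\<in>V. infinite (part_of V p v) \<longrightarrow> p v = p u)) \<longrightarrow>
          finite {v\<in>V. finite (part_of V p v)} \<longrightarrow>
          card {v\<in>V. finite (part_of V p v)} = n \<longrightarrow>
          ereal (1 / 2 ^ (2 * n - 1)) \<le> Rd2 V p \<and> Rd2 V p \<le> ereal (1 / 2 ^ n))"
proof (intro conjI impI allI)
  assume H: "(\<exists>u\<in>V. \<exists>v\<in>V. p u \<noteq> p v \<and> infinite (part_of V p u) \<and> infinite (part_of V p v))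
            \<or> infinite {v\<in>V. finite (part_of V p v)}"
  obtain T1 T2 where T: "infinite T1" "infinite T2" "T1 \<subseteq> V" "T2 \<subseteq> V"
     "\<forall>x\<in>V. (\<forall>y\<in>T1. p x \<noteq> p y) \<or> (\<forall>y\<in>T2. p x \<noteq> p y)"
    using part1_sep[OF assms(1) H] by blast
  have Z: "\<forall>f. mono_copy phib V p f \<longrightarrow> upper_density (f ` V) = 0"
    using part1_core[OF T] by blast
  then show "\<exists>\<phi>::coloring. \<forall>f. mono_copy \<phi> V p f \<longrightarrow> upper_density (f ` V) = 0" by blast
  show "\<not> ramsey_dense V p"
    unfolding ramsey_dense_def using Z by force
next
  fix n :: nat
  assume "1 \<le> n" and U: "\<exists>u\<in>V. infinite (part_of V p u) \<and> (\<forall>v\<in>V. infinite (part_of V p v) \<longrightarrow> p v = p u)"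
    and fin: "finite {v\<in>V. finite (part_of V p v)}" and cn: "card {v\<in>V. finite (part_of V p v)} = n"
  obtain u where u: "u \<in> V" "infinite (part_of V p u)" "\<forall>v\<in>V. infinite (part_of V p v) \<longrightarrow> p v = p u"
    using U by blast
  show "ereal (1 / 2 ^ (2 * n - 1)) \<le> Rd2 V p"
    unfolding Rd2_def
  proof (rule Inf_greatest)
    fix x assume "x \<in> {Rd_col \<phi> V p |\<phi>. True}"
    then obtain \<phi> where "x = Rd_col \<phi> V p" by blast
    then show "ereal (1 / 2 ^ (2 * n - 1)) \<le> x" using part2_lower[OF assms(1) u fin cn] by simp
  qed
  show "Rd2 V p \<le> ereal (1 / 2 ^ n)" by (rule part2_upper[OF u fin cn])
qed

end
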